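(* Let $d\ge2$ and let $A,B$ be $d$-dimensional systems, with $\{\Phi^y_{AB}\}_{y=1}^{d^2}$ the $d^2$ qudit Bell states (an orthonormal basis of maximally entangled pure states, as projectors). The POVM $\{P^y_{AB}\}_{y=1}^{d^2}$ with $P^y_{AB}=\frac12\Phi^y_{AB}+\frac{1}{2d^2}I_{AB}$ is two-extendible, with two-extension $G^{y,y'}_{ABE}=\frac{1}{2d^2}\Phi^y_{AB}\otimes I_E+\frac{1}{2d^2}\Phi^{y'}_{AE}\otimes I_B$, $y,y'\in\{1,\dots,d^2\}$; but it does not belong to $\operatorname{1WL}$ (its elements do not have positive partial transpose).
   Context: A bipartite POVM $\{P^y_{AB}\}_{y\in\mathcal{Y}}$ is two-extendible if there exists a POVM $\{G^{y,y'}_{ABE}\}_{y,y'\in\mathcal{Y}}$ on $ABE$, with $E\cong B$, such that $\sum_{y'}G^{y,y'}_{ABE}=P^y_{AB}\otimes I_E$ for all $y$ and $F_{BE}G^{y,y'}_{ABE}F_{BE}^\dagger=G^{y',y}_{ABE}$ for all $y,y'$, where $F_{BE}$ is the swap unitary. A POVM is in $\operatorname{1WL}$ if $P^y_{AB}=\sum_{x}E^x_A\otimes F^{x,y}_B$ for a POVM $\{E^x_A\}_x$ and POVMs $\{F^{x,y}_B\}_y$ for each $x$. *)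

theory Defs
  imports Complex_Main
begin

text \<open>Operators on a finite-dimensional system whose computational basis is labelled
  by an index set S are represented by their matrix entries, i.e. functions
  'i => 'i => complex; only the entries with both indices in S are meaningful.
  A qudit has basis labels {..<d}; composite systems are labelled by tuples
  (a,b) for AB and (a,b,e) for ABE.\<close>

type_synonym 'i op = "'i \<Rightarrow> 'i \<Rightarrow> complex"

definition ident :: "'i op" where
  "ident i j = (if i = j then 1 else 0)"

text \<open>Positive semidefinite on index set S: the quadratic form v^* M v is a
  nonnegative real for every vector v (over the complex field this includes
  Hermiticity).\<close>
definition psd :: "'i set \<Rightarrow> 'i op \<Rightarrow> bool" where
  "psd S M \<longleftrightarrow> (\<forall>v :: 'i \<Rightarrow> complex.
      Im (\<Sum>i\<in>S. \<Sum>j\<in>S. cnj (v i) * M i j * v j) = 0 \<and>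
      Re (\<Sum>i\<in>S. \<Sum>j\<in>S. cnj (v i) * M i j * v j) \<ge> 0)"

definition is_POVM :: "'i set \<Rightarrow> 'y set \<Rightarrow> ('y \<Rightarrow> 'i op) \<Rightarrow> bool" where
  "is_POVM S Y P \<longleftrightarrow> finite Y \<and> (\<forall>y\<in>Y. psd S (P y)) \<and>
     (\<forall>i\<in>S. \<forall>j\<in>S. (\<Sum>y\<in>Y. P y i j) = ident i j)"

definition ptrans_B :: "('a \<times> 'b) op \<Rightarrow> ('a \<times> 'b) op" where
  "ptrans_B M = (\<lambda>(a, b) (a', b'). M (a, b') (a', b))"

definition PPT :: "('a \<times> 'b) set \<Rightarrow> ('a \<times> 'b) op \<Rightarrow> bool" where
  "PPT S M \<longleftrightarrow> psd S (ptrans_B M)"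

text \<open>Embeddings into ABE (indices (a,b,e)), with E a copy of B:
  M_AB tensor I_E, M_AE tensor I_B, and conjugation by the swap F_BE.\<close>
definition ext_AB :: "(nat \<times> nat) op \<Rightarrow> (nat \<times> nat \<times> nat) op" where
  "ext_AB M = (\<lambda>(a, b, e) (a', b', e'). M (a, b) (a', b') * ident e e')"

definition ext_AE :: "(nat \<times> nat) op \<Rightarrow> (nat \<times> nat \<times> nat) op" where
  "ext_AE M = (\<lambda>(a, b, e) (a', b', e'). M (a, e) (a', e') * ident b b')"

definition swap_BE :: "(nat \<times> nat \<times> nat) op \<Rightarrow> (nat \<times> nat \<times> nat) op" where
  "swap_BE G = (\<lambda>(a, b, e) (a', b', e'). G (a, e, b) (a', e', b'))"

definition two_extension ::
  "nat \<Rightarrow> 'y set \<Rightarrow> ('y \<Rightarrow> (nat \<times> nat) op) \<Rightarrow> ('y \<Rightarrow> 'y \<Rightarrow> (nat \<times> nat \<times> nat) op) \<Rightarrow> bool" where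
  "two_extension d Y P G \<longleftrightarrow>
     is_POVM ({..<d} \<times> {..<d} \<times> {..<d}) (Y \<times> Y) (\<lambda>(y, y'). G y y') \<and>
     (\<forall>y\<in>Y. \<forall>i\<in>{..<d} \<times> {..<d} \<times> {..<d}. \<forall>j\<in>{..<d} \<times> {..<d} \<times> {..<d}.
        (\<Sum>y'\<in>Y. G y y' i j) = ext_AB (P y) i j) \<and>
     (\<forall>y\<in>Y. \<forall>y'\<in>Y. \<forall>i\<in>{..<d} \<times> {..<d} \<times> {..<d}. \<forall>j\<in>{..<d} \<times> {..<d} \<times> {..<d}.
        swap_BE (G y y') i j = G y' y i j)"

definition two_extendible :: "nat \<Rightarrow> 'y set \<Rightarrow> ('y \<Rightarrow> (nat \<times> nat) op) \<Rightarrow> bool" where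
  "two_extendible d Y P \<longleftrightarrow> (\<exists>G. two_extension d Y P G)"

text \<open>One-way LOCC class 1WL: P^y = sum_x E^x_A tensor F^{x,y}_B, with a POVM E on A
  with finite outcome set X (labelled by naturals w.l.o.g.) and POVMs F^x on B.\<close>
definition in_1WL :: "nat \<Rightarrow> 'y set \<Rightarrow> ('y \<Rightarrow> (nat \<times> nat) op) \<Rightarrow> bool" where
  "in_1WL d Y P \<longleftrightarrow> (\<exists>(X :: nat set) E F.
     is_POVM {..<d} X E \<and> (\<forall>x\<in>X. is_POVM {..<d} Y (F x)) \<and>
     (\<forall>y\<in>Y. \<forall>a\<in>{..<d}. \<forall>b\<in>{..<d}. \<forall>a'\<in>{..<d}. \<forall>b'\<in>{..<d}.
        P y (a, b) (a', b') = (\<Sum>x\<in>X. E x a a' * F x y b b')))"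

text \<open>Generalized (Weyl-Heisenberg) qudit Bell states, labelled by y = (s,t) in
  {..<d} x {..<d}:  |Phi_(s,t)> = (Z^t X^s tensor I) (1/sqrt d) sum_i |i,i>,
  i.e. amplitude at basis vector |i,j> is omega^(t i) / sqrt d if i = j + s mod d,
  with omega = exp(2 pi i / d).  bell d y is the projector |Phi_y><Phi_y|.\<close>
definition bell_vec :: "nat \<Rightarrow> nat \<times> nat \<Rightarrow> nat \<times> nat \<Rightarrow> complex" where
  "bell_vec d y = (\<lambda>(i, j). case y of (s, t) \<Rightarrow>
      (if i = (j + s) mod d
       then cis (2 * pi * real (t * i) / real d) / complex_of_real (sqrt (real d))
       else 0))"

definition bell :: "nat \<Rightarrow> nat \<times> nat \<Rightarrow> (nat \<times> nat) op" where
  "bell d y = (\<lambda>u v. bell_vec d y u * cnj (bell_vec d y v))"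

definition bell_labels :: "nat \<Rightarrow> (nat \<times> nat) set" where
  "bell_labels d = {..<d} \<times> {..<d}"

definition bell_povm :: "nat \<Rightarrow> nat \<times> nat \<Rightarrow> (nat \<times> nat) op" where
  "bell_povm d y = (\<lambda>u v. bell d y u v / 2 + ident u v / (2 * of_nat d ^ 2))"

definition bell_ext :: "nat \<Rightarrow> nat \<times> nat \<Rightarrow> nat \<times> nat \<Rightarrow> (nat \<times> nat \<times> nat) op" where
  "bell_ext d y y' = (\<lambda>u v. ext_AB (bell d y) u v / (2 * of_nat d ^ 2)
                            + ext_AE (bell d y') u v / (2 * of_nat d ^ 2))"

end

theory Submission
  imports Defs
begin
lemma root_sum:
  fixes d i i' :: nat
  assumes "0 < d" "i < d" "i' < d"
  shows "(\<Sum>t<d. cis (2 * pi * real (t * i) / real d) * cnj (cis (2 * pi * real (t * i') / real d)))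
         = (if i = i' then of_nat d else 0)"
proof -
  define z where "z = cis (2 * pi * (real i - real i') / real d)"
  have eq: "cis (2 * pi * real (t * i) / real d) * cnj (cis (2 * pi * real (t * i') / real d)) = z ^ t" for t
    unfolding z_def DeMoivre cis_cnj cis_mult by (simp add: algebra_simps diff_divide_distrib)
  show ?thesis
  proof (cases "i = i'")
    case True thus ?thesis unfolding eq z_def by simp
  next
    case False
    have zd: "z ^ d = 1" unfolding z_def DeMoivre
    proof -
      have "real d * (2 * pi * (real i - real i') / real d) = 2 * pi * of_int (int i - int i')"
        using assms by simp
      thus "cis (real d * (2 * pi * (real i - real i') / real d)) = 1" by simp
    qed
    have z1: "z \<noteq> 1"
    proof
      assume "z = 1"
      hence "cos (2 * pi * (real i - real i') / real d) = 1" unfolding z_def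
        by (metis Re_complex_of_real cis.sel(1) one_complex.sel(1))
      then obtain n :: int where n: "2 * pi * (real i - real i') / real d = real_of_int n * 2 * pi"
        using cos_one_2pi_int by blast
      hence "pi * (real i - real i') = pi * (n * real d)" using assms by (simp add: field_simps)
      hence "real i - real i' = n * real d" using pi_gt_zero by simp
      hence "int i - int i' = n * int d" by (metis of_int_eq_iff of_int_diff of_int_mult of_int_of_nat_eq)
      moreover have "\<bar>int i - int i'\<bar> < int d" using assms by auto
      ultimately have "n = 0"
      proof -
        assume h: "int i - int i' = n * int d" "\<bar>int i - int i'\<bar> < int d"
        show "n = 0"
        proof (rule ccontr)
          assume "n \<noteq> 0"
          hence "\<bar>n\<bar> \<ge> 1" by simp
          hence "\<bar>n\<bar> * int d \<ge> int d" using assms(1) by (simp add: mult_le_cancel_right1)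
          thus False using h by (simp add: abs_mult)
        qed
      qed
      thus False using \<open>int i - int i' = n * int d\<close> False by simp
    qed
    have "(\<Sum>t<d. z ^ t) = 0" using geometric_sum[OF z1, of d] zd by simp
    thus ?thesis unfolding eq using False by simp
  qed
qed


lemma bell_entry:
  assumes "0 < d"
  shows "bell d (s, t) (i, j) (i', j') =
    (if i = (j + s) mod d \<and> i' = (j' + s) mod d
     then cis (2 * pi * real (t * i) / real d) * cnj (cis (2 * pi * real (t * i') / real d)) / of_nat d
     else 0)"
proof -
  define r where "r = complex_of_real (sqrt (real d))"
  have "sqrt (real d) * sqrt (real d) = real d" by simp
  hence sq: "r * r = of_nat d" unfolding r_def by (metis of_real_mult of_real_of_nat_eq)
  have cr: "cnj r = r" unfolding r_def by simp
  have "bell d (s, t) (i, j) (i', j') =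
    (if i = (j + s) mod d then cis (2 * pi * real (t * i) / real d) / r else 0) *
    cnj (if i' = (j' + s) mod d then cis (2 * pi * real (t * i') / real d) / r else 0)"
    unfolding bell_def bell_vec_def r_def by simp
  also have "\<dots> = (if i = (j + s) mod d \<and> i' = (j' + s) mod d
     then cis (2 * pi * real (t * i) / real d) * cnj (cis (2 * pi * real (t * i') / real d)) / (r * r)
     else 0)" by (simp add: cr)
  finally show ?thesis unfolding sq .
qed

lemma mod_cancel_nat:
  fixes j s s' d :: nat
  assumes "(j + s) mod d = (j + s') mod d"
  shows "s mod d = s' mod d"
proof -
  have "int ((j + s) mod d) = int ((j + s') mod d)" using assms by simp
  hence "(int j + int s) mod int d = (int j + int s') mod int d" by (simp add: zmod_int)
  hence "((int j + int s) - int j) mod int d = ((int j + int s') - int j) mod int d"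
    by (metis mod_diff_left_eq)
  hence "int s mod int d = int s' mod int d" by simp
  thus ?thesis by (metis of_nat_eq_iff zmod_int)
qed
lemma unique_shift:
  fixes d i j :: nat
  assumes "0 < d" "i < d" "j < d"
  shows "(\<Sum>s<d. (if i = (j + s) mod d then (1::complex) else 0)) = 1"
proof -
  define s0 where "s0 = (i + d - j) mod d"
  have s0: "s0 < d" using assms s0_def by simp
  have e: "i = (j + s0) mod d"
  proof -
    have "(j + s0) mod d = (j + (i + d - j)) mod d" unfolding s0_def by (simp add: mod_add_right_eq)
    also have "j + (i + d - j) = i + d" using assms by simp
    finally show ?thesis using assms by simp
  qed
  have u: "s = s0" if "s < d" "i = (j + s) mod d" for s
  proof -
    have "(j + s) mod d = (j + s0) mod d" using e that by simp
    hence "s mod d = s0 mod d" by (rule mod_cancel_nat) 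
    thus ?thesis using that s0 by simp
  qed
  have "(\<Sum>s<d. (if i = (j + s) mod d then (1::complex) else 0)) = (\<Sum>s<d. (if s = s0 then 1 else 0))"
    by (rule sum.cong) (use u e in auto)
  also have "\<dots> = 1" using s0 by simp
  finally show ?thesis .
qed

lemma bell_complete:
  assumes "0 < d" "i < d" "j < d" "i' < d" "j' < d"
  shows "(\<Sum>y\<in>bell_labels d. bell d y (i, j) (i', j')) = ident (i, j) (i', j')"
proof -
  have dnz: "(of_nat d :: complex) \<noteq> 0" using assms(1) by simp
  have "(\<Sum>y\<in>bell_labels d. bell d y (i, j) (i', j')) = (\<Sum>s<d. \<Sum>t<d. bell d (s, t) (i, j) (i', j'))"
    unfolding bell_labels_def by (simp add: sum.cartesian_product)
  also have "\<dots> = (\<Sum>s<d. if i = (j + s) mod d \<and> i' = (j' + s) mod d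
      then (\<Sum>t<d. cis (2 * pi * real (t * i) / real d) * cnj (cis (2 * pi * real (t * i') / real d))) / of_nat d else 0)"
    unfolding bell_entry[OF assms(1)]
    by (intro sum.cong refl) (auto simp: sum_divide_distrib)
  also have "\<dots> = (\<Sum>s<d. if i = (j + s) mod d \<and> i' = (j' + s) mod d then (if i = i' then 1 else 0) else 0)"
    unfolding root_sum[OF assms(1) assms(2) assms(4)] by (intro sum.cong refl) (use dnz in auto)
  also have "\<dots> = ident (i, j) (i', j')"
  proof (cases "i = i'")
    case False thus ?thesis by (simp add: ident_def)
  next
    case True
    show ?thesis
    proof (cases "j = j'")
      case True
      thus ?thesis using \<open>i = i'\<close> unique_shift[OF assms(1) assms(2) assms(3)] by (simp add: ident_def)
    next
      case False
      have "\<not> (i = (j + s) mod d \<and> i = (j' + s) mod d)" for s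
      proof
        assume "i = (j + s) mod d \<and> i = (j' + s) mod d"
        hence "(s + j) mod d = (s + j') mod d" by (simp add: add.commute)
        hence "j mod d = j' mod d" by (rule mod_cancel_nat)
        thus False using False assms by simp
      qed
      thus ?thesis using True False by (auto simp: ident_def intro!: sum.neutral)
    qed
  qed
  finally show ?thesis .
qed

definition qf :: "'i set \<Rightarrow> 'i op \<Rightarrow> ('i \<Rightarrow> complex) \<Rightarrow> complex" where
  "qf S M v = (\<Sum>i\<in>S. \<Sum>j\<in>S. cnj (v i) * M i j * v j)"

definition nn :: "complex \<Rightarrow> bool" where
  "nn z \<longleftrightarrow> Im z = 0 \<and> 0 \<le> Re z"

lemma psd_qf: "psd S M \<longleftrightarrow> (\<forall>v. nn (qf S M v))"
  unfolding psd_def qf_def nn_def by simp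

lemma nn_add: "nn a \<Longrightarrow> nn b \<Longrightarrow> nn (a + b)"
  unfolding nn_def by simp

lemma nn_sum: "(\<And>x. x \<in> A \<Longrightarrow> nn (f x)) \<Longrightarrow> nn (sum f A)"
proof (induction A rule: infinite_finite_induct)
  case (infinite A) thus ?case by (simp add: nn_def)
next
  case empty thus ?case by (simp add: nn_def)
next
  case (insert x F) thus ?case by (simp add: nn_add)
qed

lemma nn_div: "nn z \<Longrightarrow> 0 < r \<Longrightarrow> nn (z / complex_of_real r)"
  unfolding nn_def by (simp add: Re_divide_of_real Im_divide_of_real)

lemma nn_cnj_mult: "nn (cnj z * z)"
  unfolding nn_def by (simp add: complex_mult_cnj mult.commute[of "cnj z" z])

lemma pair_sum: "(\<Sum>x\<in>A \<times> B. f x) = (\<Sum>a\<in>A. \<Sum>b\<in>B. f (a, b))"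
  by (simp add: sum.cartesian_product)

lemma triple_sum: "(\<Sum>x\<in>A \<times> B \<times> C. f x) = (\<Sum>a\<in>A. \<Sum>b\<in>B. \<Sum>c\<in>C. f (a, b, c))"
  by (simp add: sum.cartesian_product)

lemma qf_add_div:
  "qf S (\<lambda>u w. M u w / a + N u w / b) v = qf S M v / a + qf S N v / b"
  unfolding qf_def by (simp add: algebra_simps sum.distrib sum_divide_distrib)

lemma qf_ident: "finite S \<Longrightarrow> nn (qf S ident v)"
proof -
  assume fin: "finite S"
  have "qf S ident v = (\<Sum>i\<in>S. cnj (v i) * v i)" if "finite S"
  proof -
    have e: "cnj (v i) * ident i j * v j = (if i = j then cnj (v j) * v j else 0)" for i j
      by (simp add: ident_def)
    show ?thesis unfolding qf_def e using that by (intro sum.cong refl) simp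
  qed
  thus ?thesis using fin by (simp add: nn_sum nn_cnj_mult)
qed

lemma qf_bell: "nn (qf S (bell d y) v)"
proof -
  define w where "w = (\<Sum>i\<in>S. cnj (v i) * bell_vec d y i)"
  have "qf S (bell d y) v = w * cnj w"
    unfolding qf_def bell_def w_def
    by (simp add: sum_distrib_left sum_distrib_right algebra_simps)
  thus ?thesis using nn_cnj_mult[of w] by (simp add: mult.commute)
qed

lemma sum_if_const_aux: "(\<Sum>x\<in>A. if P then f x else 0) = (if P then sum f A else 0)"
  by (cases P) simp_all

lemma delta2: "finite S \<Longrightarrow> b \<in> S \<Longrightarrow>
  (\<Sum>b'\<in>S. \<Sum>e'\<in>S. if b' = b then X e' else 0) = (\<Sum>e'\<in>S. X e')"
  by (simp add: sum_if_const_aux)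

lemma sum_if_const: "(\<Sum>x\<in>A. if P then f x else 0) = (if P then sum f A else 0)"
  by (cases P) simp_all

lemma qf_ext_AB:
  assumes fin: "finite S"
  shows "qf (S \<times> S \<times> S) (ext_AB M) v = (\<Sum>e\<in>S. qf (S \<times> S) M (\<lambda>(a, b). v (a, b, e)))"
proof -
  have e: "cnj (v (a, b, e)) * ext_AB M (a, b, e) (a', b', e') * v (a', b', e') =
     (if e' = e then cnj (v (a, b, e)) * M (a, b) (a', b') * v (a', b', e) else 0)" for a b e a' b' e'
    by (simp add: ext_AB_def ident_def)
  have "qf (S \<times> S \<times> S) (ext_AB M) v =
      (\<Sum>a\<in>S. \<Sum>b\<in>S. \<Sum>e\<in>S. \<Sum>a'\<in>S. \<Sum>b'\<in>S. cnj (v (a, b, e)) * M (a, b) (a', b') * v (a', b', e))"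
    unfolding qf_def triple_sum e using fin by simp
  also have "\<dots> = (\<Sum>a\<in>S. \<Sum>e\<in>S. \<Sum>b\<in>S. \<Sum>a'\<in>S. \<Sum>b'\<in>S. cnj (v (a, b, e)) * M (a, b) (a', b') * v (a', b', e))"
    by (rule sum.cong[OF refl], rule sum.swap)
  also have "\<dots> = (\<Sum>e\<in>S. \<Sum>a\<in>S. \<Sum>b\<in>S. \<Sum>a'\<in>S. \<Sum>b'\<in>S. cnj (v (a, b, e)) * M (a, b) (a', b') * v (a', b', e))"
    by (rule sum.swap)
  also have "\<dots> = (\<Sum>e\<in>S. qf (S \<times> S) M (\<lambda>(a, b). v (a, b, e)))"
    unfolding qf_def pair_sum by simp
  finally show ?thesis .
qed

lemma qf_ext_AE:
  assumes fin: "finite S"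
  shows "qf (S \<times> S \<times> S) (ext_AE M) v = (\<Sum>b\<in>S. qf (S \<times> S) M (\<lambda>(a, e). v (a, b, e)))"
proof -
  have e: "cnj (v (a, b, e)) * ext_AE M (a, b, e) (a', b', e') * v (a', b', e') =
     (if b' = b then cnj (v (a, b, e)) * M (a, e) (a', e') * v (a', b, e') else 0)" for a b e a' b' e'
    by (simp add: ext_AE_def ident_def)
  have "qf (S \<times> S \<times> S) (ext_AE M) v =
      (\<Sum>a\<in>S. \<Sum>b\<in>S. \<Sum>e\<in>S. \<Sum>a'\<in>S. \<Sum>b'\<in>S. \<Sum>e'\<in>S.
         (if b' = b then cnj (v (a, b, e)) * M (a, e) (a', e') * v (a', b, e') else 0))"
    unfolding qf_def triple_sum e by simp
  also have "\<dots> = (\<Sum>a\<in>S. \<Sum>b\<in>S. \<Sum>e\<in>S. \<Sum>a'\<in>S. \<Sum>e'\<in>S. cnj (v (a, b, e)) * M (a, e) (a', e') * v (a', b, e'))"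
    using fin by (simp add: delta2)
  also have "\<dots> = (\<Sum>b\<in>S. \<Sum>a\<in>S. \<Sum>e\<in>S. \<Sum>a'\<in>S. \<Sum>e'\<in>S. cnj (v (a, b, e)) * M (a, e) (a', e') * v (a', b, e'))"
    by (rule sum.swap)
  also have "\<dots> = (\<Sum>b\<in>S. qf (S \<times> S) M (\<lambda>(a, e). v (a, b, e)))"
    unfolding qf_def pair_sum by simp
  finally show ?thesis .
qed

lemma psd_ext_AB: "finite S \<Longrightarrow> (\<And>v. nn (qf (S \<times> S) M v)) \<Longrightarrow> nn (qf (S \<times> S \<times> S) (ext_AB M) v)"
  by (simp add: qf_ext_AB nn_sum)

lemma psd_ext_AE: "finite S \<Longrightarrow> (\<And>v. nn (qf (S \<times> S) M v)) \<Longrightarrow> nn (qf (S \<times> S \<times> S) (ext_AE M) v)"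
  by (simp add: qf_ext_AE nn_sum)

lemma nn_div_d: "0 < d \<Longrightarrow> nn z \<Longrightarrow> nn (z / (2 * of_nat d ^ 2))"
proof -
  assume "0 < d" "nn z"
  have "(2 * of_nat d ^ 2 :: complex) = complex_of_real (2 * real d ^ 2)" by simp
  thus ?thesis using nn_div[OF \<open>nn z\<close>, of "2 * real d ^ 2"] \<open>0 < d\<close> by simp
qed

lemma nn_div_2: "nn z \<Longrightarrow> nn (z / 2)"
  using nn_div[of z 2] by simp

lemma card_labels: "card (bell_labels d) = d * d"
  unfolding bell_labels_def by (simp add: card_cartesian_product)

lemma part1:
  assumes "0 < d"
  shows "is_POVM ({..<d} \<times> {..<d}) (bell_labels d) (bell_povm d)"
  unfolding is_POVM_def
proof (intro conjI ballI)
  show "finite (bell_labels d)" unfolding bell_labels_def by simp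
next
  fix y
  show "psd ({..<d} \<times> {..<d}) (bell_povm d y)"
    unfolding psd_qf bell_povm_def qf_add_div
    using assms by (intro allI nn_add nn_div_2 nn_div_d qf_bell qf_ident) auto
next
  fix i j assume i: "i \<in> {..<d} \<times> {..<d}" and j: "j \<in> {..<d} \<times> {..<d}"
  obtain a b where ab: "i = (a, b)" "a < d" "b < d" using i by auto
  obtain a' b' where ab': "j = (a', b')" "a' < d" "b' < d" using j by auto
  have "(\<Sum>y\<in>bell_labels d. bell_povm d y i j)
      = (\<Sum>y\<in>bell_labels d. bell d y i j) / 2 + of_nat (card (bell_labels d)) * ident i j / (2 * of_nat d ^ 2)"
    unfolding bell_povm_def by (simp add: sum.distrib sum_divide_distrib)
  also have "\<dots> = ident i j / 2 + of_nat (d * d) * ident i j / (2 * of_nat d ^ 2)"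
    unfolding card_labels ab ab'(1) using bell_complete assms ab ab' by simp
  also have "\<dots> = ident i j"
    using assms by (simp add: power2_eq_square field_simps)
  finally show "(\<Sum>y\<in>bell_labels d. bell_povm d y i j) = ident i j" .
qed

lemma ext_AB_ident: "ext_AB ident (a, b, e) (a', b', e') = ident (a, b, e) (a', b', e')"
  unfolding ext_AB_def ident_def by auto

lemma ext_AE_ident: "ext_AE ident (a, b, e) (a', b', e') = ident (a, b, e) (a', b', e')"
  unfolding ext_AE_def ident_def by auto

lemma sum_ext_AB:
  assumes "0 < d" "a < d" "b < d" "a' < d" "b' < d"
  shows "(\<Sum>y\<in>bell_labels d. ext_AB (bell d y) (a, b, e) (a', b', e')) = ident (a, b, e) (a', b', e')"
proof -
  have "(\<Sum>y\<in>bell_labels d. ext_AB (bell d y) (a, b, e) (a', b', e'))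
      = (\<Sum>y\<in>bell_labels d. bell d y (a, b) (a', b')) * ident e e'"
    unfolding ext_AB_def by (simp add: sum_distrib_right)
  also have "\<dots> = ident (a, b) (a', b') * ident e e'" using bell_complete assms by simp
  finally show ?thesis unfolding ident_def by auto
qed

lemma sum_ext_AE:
  assumes "0 < d" "a < d" "e < d" "a' < d" "e' < d"
  shows "(\<Sum>y\<in>bell_labels d. ext_AE (bell d y) (a, b, e) (a', b', e')) = ident (a, b, e) (a', b', e')"
proof -
  have "(\<Sum>y\<in>bell_labels d. ext_AE (bell d y) (a, b, e) (a', b', e'))
      = (\<Sum>y\<in>bell_labels d. bell d y (a, e) (a', e')) * ident b b'"
    unfolding ext_AE_def by (simp add: sum_distrib_right)
  also have "\<dots> = ident (a, e) (a', e') * ident b b'" using bell_complete assms by simp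
  finally show ?thesis unfolding ident_def by auto
qed

lemma cd_lemma: "0 < d \<Longrightarrow> (of_nat (d * d) :: complex) / (2 * of_nat d ^ 2) = 1 / 2"
  by (simp add: power2_eq_square)

lemma part2:
  assumes "0 < d"
  shows "two_extension d (bell_labels d) (bell_povm d) (bell_ext d)"
  unfolding two_extension_def
proof (intro conjI ballI)
  let ?S = "{..<d}"
  have fin: "finite ?S" by simp
  show "is_POVM (?S \<times> ?S \<times> ?S) (bell_labels d \<times> bell_labels d) (\<lambda>(y, y'). bell_ext d y y')"
    unfolding is_POVM_def
  proof (intro conjI ballI)
    show "finite (bell_labels d \<times> bell_labels d)" unfolding bell_labels_def by simp
  next
    fix yy assume "yy \<in> bell_labels d \<times> bell_labels d"
    obtain y y' where yy: "yy = (y, y')" by (cases yy) blast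
    show "psd (?S \<times> ?S \<times> ?S) ((\<lambda>(y, y'). bell_ext d y y') yy)"
      unfolding psd_qf yy bell_ext_def split qf_add_div
      using assms fin
      by (intro allI nn_add nn_div_d psd_ext_AB psd_ext_AE qf_bell) auto
  next
    fix i j assume i: "i \<in> ?S \<times> ?S \<times> ?S" and j: "j \<in> ?S \<times> ?S \<times> ?S"
    obtain a b e where abe: "i = (a, b, e)" "a < d" "b < d" "e < d" using i by auto
    obtain a' b' e' where abe': "j = (a', b', e')" "a' < d" "b' < d" "e' < d" using j by auto
    have "(\<Sum>yy\<in>bell_labels d \<times> bell_labels d. (\<lambda>(y, y'). bell_ext d y y') yy i j)
       = (\<Sum>y\<in>bell_labels d. \<Sum>y'\<in>bell_labels d. bell_ext d y y' i j)"
      by (simp add: pair_sum)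
    also have "\<dots> = of_nat (card (bell_labels d)) * (\<Sum>y\<in>bell_labels d. ext_AB (bell d y) i j) / (2 * of_nat d ^ 2)
        + of_nat (card (bell_labels d)) * (\<Sum>y'\<in>bell_labels d. ext_AE (bell d y') i j) / (2 * of_nat d ^ 2)"
      unfolding bell_ext_def
      by (simp add: sum.distrib sum_divide_distrib sum_distrib_left)
    also have "\<dots> = of_nat (d * d) / (2 * of_nat d ^ 2) * ident i j + of_nat (d * d) / (2 * of_nat d ^ 2) * ident i j"
      unfolding card_labels abe(1) abe'(1) using sum_ext_AB sum_ext_AE assms abe abe' by simp
    also have "\<dots> = ident i j" unfolding cd_lemma[OF assms] by simp
    finally show "(\<Sum>yy\<in>bell_labels d \<times> bell_labels d. (\<lambda>(y, y'). bell_ext d y y') yy i j) = ident i j" .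
  qed
next
  fix y i j assume y: "y \<in> bell_labels d" and i: "i \<in> {..<d} \<times> {..<d} \<times> {..<d}" and j: "j \<in> {..<d} \<times> {..<d} \<times> {..<d}"
  obtain a b e where abe: "i = (a, b, e)" "a < d" "b < d" "e < d" using i by auto
  obtain a' b' e' where abe': "j = (a', b', e')" "a' < d" "b' < d" "e' < d" using j by auto
  have "(\<Sum>y'\<in>bell_labels d. bell_ext d y y' i j)
     = of_nat (card (bell_labels d)) * ext_AB (bell d y) i j / (2 * of_nat d ^ 2)
        + (\<Sum>y'\<in>bell_labels d. ext_AE (bell d y') i j) / (2 * of_nat d ^ 2)"
    unfolding bell_ext_def by (simp add: sum.distrib sum_divide_distrib)
  also have "\<dots> = of_nat (d * d) / (2 * of_nat d ^ 2) * ext_AB (bell d y) i j + ident i j / (2 * of_nat d ^ 2)"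
    unfolding card_labels abe(1) abe'(1) using sum_ext_AE assms abe abe' by simp
  also have "\<dots> = ext_AB (bell_povm d y) i j"
    unfolding cd_lemma[OF assms] abe(1) abe'(1) ext_AB_def bell_povm_def ident_def by (auto simp: field_simps)
  finally show "(\<Sum>y'\<in>bell_labels d. bell_ext d y y' i j) = ext_AB (bell_povm d y) i j" .
next
  fix y y' i j
  show "swap_BE (bell_ext d y y') i j = bell_ext d y' y i j"
    unfolding swap_BE_def bell_ext_def ext_AB_def ext_AE_def
    by (cases i; cases j) (auto simp: algebra_simps)
qed

lemma sum2:
  assumes "finite S" "p \<in> S" "q \<in> S" "p \<noteq> q" "\<And>i. i \<in> S \<Longrightarrow> i \<noteq> p \<Longrightarrow> i \<noteq> q \<Longrightarrow> f i = 0"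
  shows "sum f S = f p + f q"
proof -
  have "sum f S = sum f {p, q}"
    using assms by (intro sum.mono_neutral_right) auto
  thus ?thesis using assms(4) by simp
qed

definition four :: "'i op \<Rightarrow> 'i \<Rightarrow> 'i \<Rightarrow> complex \<Rightarrow> complex \<Rightarrow> complex" where
  "four M p q \<alpha> \<beta> = cnj \<alpha> * M p p * \<alpha> + cnj \<alpha> * M p q * \<beta> + cnj \<beta> * M q p * \<alpha> + cnj \<beta> * M q q * \<beta>"

lemma qf_two:
  assumes "finite S" "p \<in> S" "q \<in> S" "p \<noteq> q"
  shows "qf S M (\<lambda>i. if i = p then \<alpha> else if i = q then \<beta> else 0) = four M p q \<alpha> \<beta>"
proof -
  let ?v = "\<lambda>i. if i = p then \<alpha> else if i = q then \<beta> else 0"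
  have inner: "(\<Sum>j\<in>S. cnj (?v i) * M i j * ?v j) = cnj (?v i) * M i p * \<alpha> + cnj (?v i) * M i q * \<beta>" for i
    using assms by (subst sum2[of S p q]) auto
  have "qf S M ?v = (\<Sum>i\<in>S. cnj (?v i) * M i p * \<alpha> + cnj (?v i) * M i q * \<beta>)"
    unfolding qf_def inner ..
  also have "\<dots> = four M p q \<alpha> \<beta>"
    using assms by (subst sum2[of S p q]) (auto simp: four_def)
  finally show ?thesis .
qed

lemma real_quad:
  fixes a e N :: real
  assumes "0 \<le> a" "0 \<le> N" "\<And>t. 0 \<le> a * t\<^sup>2 * N - 2 * t * N + e"
  shows "N \<le> a * e"
proof (cases "a > 0")
  case True
  have "0 \<le> a * (1/a)\<^sup>2 * N - 2 * (1/a) * N + e" using assms(3) .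
  also have "\<dots> = e - N / a" using True by (simp add: power2_eq_square field_simps)
  finally show ?thesis using True by (simp add: field_simps)
next
  case False
  hence a0: "a = 0" using assms(1) by simp
  show ?thesis
  proof (rule ccontr)
    assume "\<not> N \<le> a * e"
    hence Np: "N > 0" using a0 by simp
    have "0 \<le> a * ((\<bar>e\<bar> + 1) / N)\<^sup>2 * N - 2 * ((\<bar>e\<bar> + 1) / N) * N + e" using assms(3) .
    also have "\<dots> = - 2 * (\<bar>e\<bar> + 1) + e" using a0 Np by simp
    finally show False by simp
  qed
qed

lemma psd2:
  assumes "psd S M" "finite S" "p \<in> S" "q \<in> S" "p \<noteq> q"
  shows "nn (M p p)" "nn (M q q)" "M q p = cnj (M p q)"
        "(cmod (M p q))\<^sup>2 \<le> Re (M p p) * Re (M q q)"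
proof -
  have Q: "nn (four M p q \<alpha> \<beta>)" for \<alpha> \<beta>
    using assms qf_two[OF assms(2-5), of M \<alpha> \<beta>] unfolding psd_qf by metis
  show pp: "nn (M p p)" using Q[of 1 0] by (simp add: four_def)
  show qq: "nn (M q q)" using Q[of 0 1] by (simp add: four_def)
  have h1: "Im (M p q) + Im (M q p) = 0" using Q[of 1 1] pp qq by (simp add: four_def nn_def)
  have h2: "Re (M p q) - Re (M q p) = 0" using Q[of 1 \<i>] pp qq by (simp add: four_def nn_def)
  show herm: "M q p = cnj (M p q)" using h1 h2 by (simp add: complex_eq_iff)
  define b where "b = M p q"
  have "0 \<le> Re (M p p) * t\<^sup>2 * (cmod b)\<^sup>2 - 2 * t * (cmod b)\<^sup>2 + Re (M q q)" for t :: real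
  proof -
    have "nn (four M p q (- of_real t * b) 1)" by (rule Q)
    moreover have "Re (four M p q (- of_real t * b) 1) = Re (M p p) * t\<^sup>2 * (cmod b)\<^sup>2 - 2 * t * (cmod b)\<^sup>2 + Re (M q q)"
      using pp qq herm unfolding four_def nn_def b_def cmod_power2
      by (simp add: power2_eq_square algebra_simps)
    ultimately show ?thesis by (simp add: nn_def)
  qed
  from real_quad[OF _ _ this] pp show "(cmod (M p q))\<^sup>2 \<le> Re (M p p) * Re (M q q)"
    unfolding b_def nn_def by simp
qed

lemma amgm_aux:
  fixes X Y Z :: real
  assumes "0 \<le> X" "0 \<le> Y" "0 \<le> Z" "Z\<^sup>2 \<le> X * Y"
  shows "2 * Z \<le> X + Y"
proof -
  have "0 \<le> (X - Y)\<^sup>2" by simp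
  moreover have "(X + Y)\<^sup>2 = (X - Y)\<^sup>2 + 4 * (X * Y)" by algebra
  moreover have "(2 * Z)\<^sup>2 = 4 * Z\<^sup>2" by algebra
  ultimately have h: "(2 * Z)\<^sup>2 \<le> (X + Y)\<^sup>2" using assms(4) by linarith
  have "0 \<le> X + Y" using assms(1,2) by linarith
  from power2_le_imp_le[OF h this] show ?thesis .
qed

lemma fin_arith:
  fixes A B P Q Z X Y :: real
  shows "A = X \<Longrightarrow> B = Y \<Longrightarrow> P + Q \<ge> - 2 * Z \<Longrightarrow> 2 * Z \<le> X + Y \<Longrightarrow> 0 \<le> A + P + Q + B"
  by linarith

lemma schur2:
  assumes "nn E11" "nn E22" "nn F11" "nn F22" "E21 = cnj E12" "F21 = cnj F12"
    "(cmod E12)\<^sup>2 \<le> Re E11 * Re E22" "(cmod F12)\<^sup>2 \<le> Re F11 * Re F22"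
  shows "0 \<le> Re (cnj \<alpha> * \<alpha> * E11 * F11 + cnj \<alpha> * \<beta> * E12 * F21 + cnj \<beta> * \<alpha> * E21 * F12 + cnj \<beta> * \<beta> * E22 * F22)"
proof -
  define e1 where "e1 = Re E11"
  define e2 where "e2 = Re E22"
  define f1 where "f1 = Re F11"
  define f2 where "f2 = Re F22"
  have r: "E11 = of_real e1" "E22 = of_real e2" "F11 = of_real f1" "F22 = of_real f2"
    "0 \<le> e1" "0 \<le> e2" "0 \<le> f1" "0 \<le> f2"
    using assms(1-4) unfolding nn_def e1_def e2_def f1_def f2_def by (auto simp: complex_eq_iff)
  define w where "w = cnj \<alpha> * \<beta> * E12 * F21"
  have cw: "cnj \<beta> * \<alpha> * E21 * F12 = cnj w" unfolding w_def assms(5,6) by simp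
  have aa: "Re (cnj \<alpha> * \<alpha> * E11 * F11) = (cmod \<alpha>)\<^sup>2 * e1 * f1"
  proof -
    have c: "cnj \<alpha> * \<alpha> = of_real ((cmod \<alpha>)\<^sup>2)"
      by (subst mult.commute) (rule complex_norm_square[symmetric])
    have "cnj \<alpha> * \<alpha> * E11 * F11 = of_real ((cmod \<alpha>)\<^sup>2 * e1 * f1)"
      unfolding r c by (simp only: of_real_mult)
    thus ?thesis by (simp only: Re_complex_of_real)
  qed
  have bb: "Re (cnj \<beta> * \<beta> * E22 * F22) = (cmod \<beta>)\<^sup>2 * e2 * f2"
  proof -
    have c: "cnj \<beta> * \<beta> = of_real ((cmod \<beta>)\<^sup>2)"
      by (subst mult.commute) (rule complex_norm_square[symmetric])
    have "cnj \<beta> * \<beta> * E22 * F22 = of_real ((cmod \<beta>)\<^sup>2 * e2 * f2)"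
      unfolding r c by (simp only: of_real_mult)
    thus ?thesis by (simp only: Re_complex_of_real)
  qed
  have rw: "Re w + Re (cnj w) \<ge> - 2 * cmod w"
    using abs_Re_le_cmod[of w] by simp
  have cm: "cmod w = cmod \<alpha> * cmod \<beta> * cmod E12 * cmod F12"
    unfolding w_def assms(6) by (simp add: norm_mult)
  have "(cmod w)\<^sup>2 \<le> ((cmod \<alpha>)\<^sup>2 * e1 * f1) * ((cmod \<beta>)\<^sup>2 * e2 * f2)"
  proof -
    have "(cmod w)\<^sup>2 = (cmod \<alpha>)\<^sup>2 * (cmod \<beta>)\<^sup>2 * ((cmod E12)\<^sup>2 * (cmod F12)\<^sup>2)"
      unfolding cm by (simp add: power_mult_distrib)
    also have "\<dots> \<le> (cmod \<alpha>)\<^sup>2 * (cmod \<beta>)\<^sup>2 * ((e1 * e2) * (f1 * f2))"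
    proof -
      have "(cmod E12)\<^sup>2 * (cmod F12)\<^sup>2 \<le> (e1 * e2) * (f1 * f2)"
        using assms(7,8) r unfolding e1_def e2_def f1_def f2_def by (intro mult_mono) auto
      thus ?thesis by (intro mult_left_mono) auto
    qed
    also have "\<dots> = ((cmod \<alpha>)\<^sup>2 * e1 * f1) * ((cmod \<beta>)\<^sup>2 * e2 * f2)" by simp
    finally show ?thesis .
  qed
  hence "2 * cmod w \<le> (cmod \<alpha>)\<^sup>2 * e1 * f1 + (cmod \<beta>)\<^sup>2 * e2 * f2"
    using r by (intro amgm_aux) (simp_all add: mult_nonneg_nonneg)
  hence ge: "0 \<le> Re (cnj \<alpha> * \<alpha> * E11 * F11) + Re w + Re (cnj w) + Re (cnj \<beta> * \<beta> * E22 * F22)"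
    by (rule fin_arith[OF aa bb rw])
  have eq: "Re (cnj \<alpha> * \<alpha> * E11 * F11 + cnj \<alpha> * \<beta> * E12 * F21 + cnj \<beta> * \<alpha> * E21 * F12 + cnj \<beta> * \<beta> * E22 * F22)
     = Re (cnj \<alpha> * \<alpha> * E11 * F11) + Re w + Re (cnj w) + Re (cnj \<beta> * \<beta> * E22 * F22)"
    unfolding cw w_def[symmetric] by (simp only: plus_complex.sel)
  show ?thesis unfolding eq using ge .
qed

lemma bell_vec_norm:
  assumes "0 < d" "i = (j + s) mod d"
  shows "bell_vec d (s, t) (i, j) * cnj (bell_vec d (s, t) (i, j)) = 1 / of_nat d"
proof -
  define r where "r = complex_of_real (sqrt (real d))"
  have "sqrt (real d) * sqrt (real d) = real d" by simp
  hence sq: "r * r = of_nat d" unfolding r_def by (metis of_real_mult of_real_of_nat_eq)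
  have cr: "cnj r = r" unfolding r_def by simp
  define th where "th = 2 * pi * real (t * i) / real d"
  have cc: "cis th * cnj (cis th) = 1" by (simp add: cis_cnj cis_mult)
  have "bell_vec d (s, t) (i, j) * cnj (bell_vec d (s, t) (i, j)) = (cis th * cnj (cis th)) / (r * r)"
    unfolding bell_vec_def r_def th_def using assms(2) by simp
  thus ?thesis unfolding cc sq .
qed

lemma four_calc:
  fixes c :: complex and d :: nat
  assumes "0 < d" "c * cnj c = 1 / of_nat d ^ 2"
    "M p p = 1 / (2 * of_nat d ^ 2)" "M q q = 1 / (2 * of_nat d ^ 2)" "M p q = c / 2" "M q p = cnj c / 2"
  shows "four M p q 1 (- of_nat d * cnj c) = 1 / of_nat d ^ 2 - 1 / of_nat d"
proof -
  define k where "k = c * cnj c"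
  have "four M p q 1 (- of_nat d * cnj c) = 1 / (2 * of_nat d ^ 2) - of_nat d * k
        + of_nat d ^ 2 * k / (2 * of_nat d ^ 2)"
    unfolding four_def assms(3-6) k_def by (simp add: algebra_simps power2_eq_square)
  also have "\<dots> = 1 / of_nat d ^ 2 - 1 / of_nat d"
    unfolding k_def assms(2) using assms(1) by (simp add: field_simps power2_eq_square)
  finally show ?thesis .
qed

lemma shift_ne:
  fixes d s :: nat
  assumes "2 \<le> d" "s < d"
  shows "s \<noteq> (1 + s) mod d"
proof (cases "1 + s < d")
  case True thus ?thesis by simp
next
  case False
  hence "1 + s = d" using assms by simp
  thus ?thesis using assms by simp
qed

lemma neg_part:
  fixes d s t :: nat
  assumes d2: "2 \<le> d" and st: "s < d" "t < d"
  defines "c \<equiv> bell_vec d (s, t) (s, 0) * cnj (bell_vec d (s, t) ((1 + s) mod d, 1))"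
  shows "Re (four (ptrans_B (bell_povm d (s, t))) (s, 1) ((1 + s) mod d, 0) 1 (- of_nat d * cnj c)) < 0"
proof -
  have d0: "0 < d" using d2 by simp
  have ne: "s \<noteq> (1 + s) mod d" using shift_ne[OF d2 st(1)] .
  have z1: "bell_vec d (s, t) (s, 1) = 0" unfolding bell_vec_def using ne by simp
  have z2: "bell_vec d (s, t) ((1 + s) mod d, 0) = 0" unfolding bell_vec_def using ne st by simp
  have n1: "bell_vec d (s, t) (s, 0) * cnj (bell_vec d (s, t) (s, 0)) = 1 / of_nat d"
    using bell_vec_norm[OF d0, of s 0 s t] st by simp
  have n2: "bell_vec d (s, t) ((1 + s) mod d, 1) * cnj (bell_vec d (s, t) ((1 + s) mod d, 1)) = 1 / of_nat d"
    using bell_vec_norm[OF d0, of "(1 + s) mod d" 1 s t] by (simp add: add.commute)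
  have cc: "c * cnj c = 1 / of_nat d ^ 2"
  proof -
    have "c * cnj c = (bell_vec d (s, t) (s, 0) * cnj (bell_vec d (s, t) (s, 0))) *
        (bell_vec d (s, t) ((1 + s) mod d, 1) * cnj (bell_vec d (s, t) ((1 + s) mod d, 1)))"
      unfolding c_def by (simp add: algebra_simps)
    thus ?thesis unfolding n1 n2 by (simp add: power2_eq_square)
  qed
  let ?M = "ptrans_B (bell_povm d (s, t))"
  have "four ?M (s, 1) ((1 + s) mod d, 0) 1 (- of_nat d * cnj c) = 1 / of_nat d ^ 2 - 1 / of_nat d"
  proof (rule four_calc[OF d0 cc])
    show "?M (s, 1) (s, 1) = 1 / (2 * of_nat d ^ 2)"
      unfolding ptrans_B_def bell_povm_def bell_def ident_def using z1 by simp
    show "?M ((1 + s) mod d, 0) ((1 + s) mod d, 0) = 1 / (2 * of_nat d ^ 2)"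
      unfolding ptrans_B_def bell_povm_def bell_def ident_def using z2 by simp
    show "?M (s, 1) ((1 + s) mod d, 0) = c / 2"
      unfolding ptrans_B_def bell_povm_def bell_def ident_def c_def using ne by simp
    show "?M ((1 + s) mod d, 0) (s, 1) = cnj c / 2"
      unfolding ptrans_B_def bell_povm_def bell_def ident_def c_def using ne by (simp add: mult.commute)
  qed
  moreover have "Re (1 / of_nat d ^ 2 - 1 / of_nat d :: complex) < 0"
  proof -
    have "(1 / of_nat d ^ 2 - 1 / of_nat d :: complex) = of_real (1 / real d ^ 2 - 1 / real d)"
      by simp
    hence "Re (1 / of_nat d ^ 2 - 1 / of_nat d :: complex) = 1 / real d ^ 2 - 1 / real d"
      by (simp only: Re_complex_of_real)
    also have "\<dots> < 0"
    proof -
      have "real d ^ 2 > real d" using d2 by (simp add: power2_eq_square)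
      hence "1 / real d ^ 2 < 1 / real d" using d0 by (intro divide_strict_left_mono) auto
      thus ?thesis by simp
    qed
    finally show ?thesis .
  qed
  ultimately show ?thesis by simp
qed

lemma sep_nonneg:
  fixes X :: "nat set" and E :: "nat \<Rightarrow> nat op" and F :: "nat \<Rightarrow> 'y \<Rightarrow> nat op"
  assumes povmE: "is_POVM {..<d} X E" and povmF: "\<forall>x\<in>X. is_POVM {..<d} Y (F x)"
    and rep: "\<forall>a\<in>{..<d}. \<forall>b\<in>{..<d}. \<forall>a'\<in>{..<d}. \<forall>b'\<in>{..<d}.
        Py (a, b) (a', b') = (\<Sum>x\<in>X. E x a a' * F x y b b')"
    and y: "y \<in> Y" and ab: "a1 < d" "a2 < d" "b1 < d" "b2 < d" "a1 \<noteq> a2" "b1 \<noteq> b2"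
  shows "0 \<le> Re (four (ptrans_B Py) (a1, b1) (a2, b2) \<alpha> \<beta>)"
proof -
  let ?T = "\<lambda>x. cnj \<alpha> * \<alpha> * E x a1 a1 * F x y b1 b1 + cnj \<alpha> * \<beta> * E x a1 a2 * F x y b2 b1
     + cnj \<beta> * \<alpha> * E x a2 a1 * F x y b1 b2 + cnj \<beta> * \<beta> * E x a2 a2 * F x y b2 b2"
  have "four (ptrans_B Py) (a1, b1) (a2, b2) \<alpha> \<beta> = sum ?T X"
    unfolding four_def ptrans_B_def using rep ab
    by (simp add: sum.distrib sum_distrib_left algebra_simps)
  moreover have "0 \<le> Re (?T x)" if x: "x \<in> X" for x
  proof -
    have pE: "psd {..<d} (E x)" using povmE x unfolding is_POVM_def by auto
    have pF: "psd {..<d} (F x y)" using povmF x y unfolding is_POVM_def by auto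
    note e = psd2[OF pE finite_lessThan, of a1 a2]
    note f = psd2[OF pF finite_lessThan, of b1 b2]
    show ?thesis
      using schur2[of "E x a1 a1" "E x a2 a2" "F x y b1 b1" "F x y b2 b2" "E x a2 a1" "E x a1 a2"
          "F x y b2 b1" "F x y b1 b2" \<alpha> \<beta>] e f ab
      by simp
  qed
  ultimately show ?thesis by (simp add: sum_nonneg)
qed

theorem mainTheorem5:
  fixes d :: nat
  assumes "d \<ge> 2"
  shows "is_POVM ({..<d} \<times> {..<d}) (bell_labels d) (bell_povm d)
    \<and> two_extension d (bell_labels d) (bell_povm d) (bell_ext d)
    \<and> two_extendible d (bell_labels d) (bell_povm d)
    \<and> (\<forall>y\<in>bell_labels d. \<not> PPT ({..<d} \<times> {..<d}) (bell_povm d y))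
    \<and> \<not> in_1WL d (bell_labels d) (bell_povm d)"
proof (intro conjI)
  have d0: "0 < d" using assms by simp
  show "is_POVM ({..<d} \<times> {..<d}) (bell_labels d) (bell_povm d)" by (rule part1[OF d0])
  show P2: "two_extension d (bell_labels d) (bell_povm d) (bell_ext d)" by (rule part2[OF d0])
  thus "two_extendible d (bell_labels d) (bell_povm d)" unfolding two_extendible_def by blast
  show "\<forall>y\<in>bell_labels d. \<not> PPT ({..<d} \<times> {..<d}) (bell_povm d y)"
  proof
    fix y assume y: "y \<in> bell_labels d"
    obtain s t where yst: "y = (s, t)" "s < d" "t < d" using y unfolding bell_labels_def by auto
    define c where "c = bell_vec d (s, t) (s, 0) * cnj (bell_vec d (s, t) ((1 + s) mod d, 1))"
    have neg: "Re (four (ptrans_B (bell_povm d (s, t))) (s, 1) ((1 + s) mod d, 0) 1 (- of_nat d * cnj c)) < 0"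
      unfolding c_def by (rule neg_part[OF assms yst(2,3)])
    show "\<not> PPT ({..<d} \<times> {..<d}) (bell_povm d y)"
    proof
      assume "PPT ({..<d} \<times> {..<d}) (bell_povm d y)"
      hence "nn (qf ({..<d} \<times> {..<d}) (ptrans_B (bell_povm d (s, t)))
          (\<lambda>i. if i = (s, 1) then 1 else if i = ((1 + s) mod d, 0) then - of_nat d * cnj c else 0))"
        unfolding PPT_def psd_qf yst(1) by blast
      moreover have "qf ({..<d} \<times> {..<d}) (ptrans_B (bell_povm d (s, t)))
          (\<lambda>i. if i = (s, 1) then 1 else if i = ((1 + s) mod d, 0) then - of_nat d * cnj c else 0)
          = four (ptrans_B (bell_povm d (s, t))) (s, 1) ((1 + s) mod d, 0) 1 (- of_nat d * cnj c)"
        using assms yst d0 by (intro qf_two) auto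
      ultimately show False using neg unfolding nn_def by simp
    qed
  qed
  show "\<not> in_1WL d (bell_labels d) (bell_povm d)"
  proof
    assume "in_1WL d (bell_labels d) (bell_povm d)"
    then obtain X :: "nat set" and E F where
      povmE: "is_POVM {..<d} X E" and povmF: "\<forall>x\<in>X. is_POVM {..<d} (bell_labels d) (F x)"
      and rep: "\<forall>y\<in>bell_labels d. \<forall>a\<in>{..<d}. \<forall>b\<in>{..<d}. \<forall>a'\<in>{..<d}. \<forall>b'\<in>{..<d}.
        bell_povm d y (a, b) (a', b') = (\<Sum>x\<in>X. E x a a' * F x y b b')"
      unfolding in_1WL_def by blast
    have y0: "(0, 0) \<in> bell_labels d" unfolding bell_labels_def using d0 by simp
    define c where "c = bell_vec d (0, 0) (0, 0) * cnj (bell_vec d (0, 0) ((1 + 0) mod d, 1))"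
    have neg: "Re (four (ptrans_B (bell_povm d (0, 0))) (0, 1) ((1 + 0) mod d, 0) 1 (- of_nat d * cnj c)) < 0"
      unfolding c_def by (rule neg_part[OF assms d0 d0])
    have ne: "(0::nat) \<noteq> (1 + 0) mod d" using shift_ne[OF assms d0] .
    have "0 \<le> Re (four (ptrans_B (bell_povm d (0, 0))) (0, 1) ((1 + 0) mod d, 0) 1 (- of_nat d * cnj c))"
      by (rule sep_nonneg[OF povmE povmF bspec[OF rep y0] y0]) (use assms ne in auto)
    thus False using neg by simp
  qed
qed

end
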